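(* Let $n\ge1$, let $c_I(q)$ be the coefficient of $\Psi_I$ in $S^{(1^n)}(q)$ and $e_I(q)$ the coefficient of $L_I(q)$ in $S^{(1^n)}(q)$. Then for every composition $I$ of $n$, \[ e_I(q)=\sum_{J\succeq I}\left(-\tfrac1q\right)^{\ell(I)-\ell(J)}q^{-\mathrm{st}'(I,J)}c_J(q), \] and for every composition $(j_1,\dots,j_r)$ of $n$, \[ c_{(j_1,\dots,j_r)}(q)=[r]_q^{j_1}[r-1]_q^{j_2}\cdots[2]_q^{j_{r-1}}[1]_q^{j_r}. \]
   Context: Compositions: $I=(i_1,\dots,i_r)$ positive integers with sum $n$; $\ell(I)=r$; $\mathrm{Des}(I)$ the set of partial sums other than $n$; $I\preceq J$ (equivalently $J\succeq I$) iff $\mathrm{Des}(I)\supseteq\mathrm{Des}(J)$; for $I\preceq J$, $\mathrm{st}(I,J)=\#\{(a,b)\in\mathrm{Des}(I)\times\mathrm{Des}(J):a\ge b\}$ and $\mathrm{st}'(I,J)=\#\{(a,b)\in\mathrm{Des}(I)\times\mathrm{Des}(J):a\le b\}$. $[m]_q=1+\dots+q^{m-1}$; $(1^n)=(1,\dots,1)$. Over $\mathbb K(q)$ ($\mathrm{char}\,\mathbb K=0$): packed words are words with letter set $\{1,\dots,m\}$; $\mathrm{pack}$ replaces the $t$-th smallest letter by $t$. For a packed word $w$ of length $n$: $\mathrm{WC}(w)$ is the composition of $n$ whose descent set is the set of positions $p<n$ with $w_p$ not occurring in $w_{p+1}\cdots w_n$; $\mathrm{sinv}(w)=\#\{i<j:w_i>w_j,\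 w_j\text{ not occurring in }w_{j+1}\cdots w_n\}$. $\mathbf{WQSym}$ has basis $\mathbf M_u$ with $\mathbf M_{u'}\mathbf M_{u''}=\sum\mathbf M_u$ over packed $u=v\cdot w$ with $\mathrm{pack}(v)=u'$, $\mathrm{pack}(w)=u''$; $\mathbf M_{u'}\star_q\mathbf M_{u''}=\sum q^{\mathrm{sinv}(u)-\mathrm{sinv}(u')-\mathrm{sinv}(u'')}\mathbf M_u$ (associative). $\mathbf{Sym}$ is the quotient by the span of $\mathbf M_u-\mathbf M_v$ with $\mathrm{WC}(u)=\mathrm{WC}(v)$, $\zeta$ the quotient map, $\Psi_I=\zeta(\mathbf M_u)$ for $\mathrm{WC}(u)=I$ (a basis). $\tilde S_m=\sum\mathbf M_u$ over nondecreasing packed $u$ of length $m$; $S^J(q)=\zeta(\tilde S_{j_1}\star_q\cdots\star_q\tilde S_{j_l})$; $L_J(q)=\sum_{I\preceq J}q^{\mathrm{st}(I,J)}\Psi_I$ (a basis). *)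

theory Defs
  imports Main "HOL-Computational_Algebra.Polynomial" "HOL-Computational_Algebra.Fraction_Field"
begin

definition is_comp :: "nat \<Rightarrow> nat list \<Rightarrow> bool" where
  "is_comp n I \<longleftrightarrow> (\<forall>x\<in>set I. 0 < x) \<and> sum_list I = n"

definition Des :: "nat list \<Rightarrow> nat set" where
  "Des I = {sum_list (take k I) | k. 1 \<le> k \<and> k < length I}"

text \<open>refines I J  means  I \<preceq> J, i.e. Des I contains Des J.\<close>
definition refines :: "nat list \<Rightarrow> nat list \<Rightarrow> bool" where
  "refines I J \<longleftrightarrow> Des J \<subseteq> Des I"

definition st :: "nat list \<Rightarrow> nat list \<Rightarrow> nat" where
  "st I J = card {(a, b). a \<in> Des I \<and> b \<in> Des J \<and> a \<ge> b}"

definition st' :: "nat list \<Rightarrow> nat list \<Rightarrow> nat" where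
  "st' I J = card {(a, b). a \<in> Des I \<and> b \<in> Des J \<and> a \<le> b}"

definition qint :: "'a::comm_ring_1 \<Rightarrow> nat \<Rightarrow> 'a" where
  "qint q m = (\<Sum>i<m. q ^ i)"

definition packed :: "nat list \<Rightarrow> bool" where
  "packed w \<longleftrightarrow> set w = {1..card (set w)}"

definition pack :: "nat list \<Rightarrow> nat list" where
  "pack w = map (\<lambda>x. card {y \<in> set w. y \<le> x}) w"

text \<open>Positions p (1-based, p < length w) with w_p not occurring in w_{p+1}...w_n.\<close>
definition wdes :: "nat list \<Rightarrow> nat set" where
  "wdes w = {p. 1 \<le> p \<and> p < length w \<and> w ! (p - 1) \<notin> set (drop p w)}"

definition WC :: "nat list \<Rightarrow> nat list" where
  "WC w = (THE I. is_comp (length w) I \<and> Des I = wdes w)"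

text \<open>sinv, with 0-based indices i < j.\<close>
definition sinv :: "nat list \<Rightarrow> nat" where
  "sinv w = card {(i, j). i < j \<and> j < length w \<and> w ! i > w ! j \<and> w ! j \<notin> set (drop (Suc j) w)}"

section \<open>WQSym (elements as coefficient functions on packed words) and the q-product\<close>

type_synonym 'a wqsym = "nat list \<Rightarrow> 'a"

definition wq_one :: "'a::field wqsym" where
  "wq_one u = (if u = [] then 1 else 0)"

text \<open>Bilinear extension of  M_u' *_q M_u'' = sum over packed u = v w with pack v = u', pack w = u''
  of q^(sinv u - sinv u' - sinv u'') M_u.\<close>
definition star :: "'a::field \<Rightarrow> 'a wqsym \<Rightarrow> 'a wqsym \<Rightarrow> 'a wqsym" where
  "star q f g u = (if packed u then
     (\<Sum>k\<le>length u. f (pack (take k u)) * g (pack (drop k u)) *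
        q powi (int (sinv u) - int (sinv (pack (take k u))) - int (sinv (pack (drop k u)))))
   else 0)"

fun star_list :: "'a::field \<Rightarrow> 'a wqsym list \<Rightarrow> 'a wqsym" where
  "star_list q [] = wq_one"
| "star_list q (f # fs) = star q f (star_list q fs)"

definition Stilde :: "nat \<Rightarrow> 'a::field wqsym" where
  "Stilde m u = (if packed u \<and> length u = m \<and> sorted u then 1 else 0)"

text \<open>zeta, expressed in coordinates w.r.t. the basis Psi: coefficient of Psi_I in zeta(F).\<close>
definition zeta :: "'a::field wqsym \<Rightarrow> nat list \<Rightarrow> 'a" where
  "zeta F I = (\<Sum>u | packed u \<and> length u = sum_list I \<and> WC u = I. F u)"

text \<open>Coefficients of S^J(q) in the Psi basis.\<close>
definition SJ :: "'a::field \<Rightarrow> nat list \<Rightarrow> nat list \<Rightarrow> 'a" where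
  "SJ q J = zeta (star_list q (map Stilde J))"

text \<open>Coefficients, w.r.t. the basis L_J(q) = sum_{I \<preceq> J} q^{st(I,J)} Psi_I, of a homogeneous
  element of degree n given by its Psi-coefficients F.\<close>
definition Lcoeffs :: "'a::field \<Rightarrow> nat \<Rightarrow> (nat list \<Rightarrow> 'a) \<Rightarrow> nat list \<Rightarrow> 'a" where
  "Lcoeffs q n F = (THE e. (\<forall>I. is_comp n I \<longrightarrow>
        F I = (\<Sum>J | is_comp n J \<and> refines I J. q ^ st I J * e J))
      \<and> (\<forall>J. \<not> is_comp n J \<longrightarrow> e J = 0))"

definition qX :: "'k::field poly fract" where
  "qX = Fract [:0, 1:] 1"

end

theory Submission
  imports Defs
begin


lemma Des_finite: "finite (Des I)"
proof -
  have "Des I \<subseteq> (\<lambda>k. sum_list (take k I)) ` {..<length I}" unfolding Des_def by auto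
  thus ?thesis by (rule finite_subset) auto
qed

lemma Des_Nil[simp]: "Des [] = {}" unfolding Des_def by auto

lemma Des_Cons: "Des (i # I) = (if I = [] then {} else insert i ((+) i ` Des I))"
proof (cases "I = []")
  case True thus ?thesis unfolding Des_def by auto
next
  case False
  have "Des (i # I) = insert i ((+) i ` Des I)"
  proof (rule set_eqI, rule iffI)
    fix x assume "x \<in> Des (i # I)"
    then obtain k where k: "1 \<le> k" "k < Suc (length I)" "x = sum_list (take k (i # I))"
      unfolding Des_def by auto
    show "x \<in> insert i ((+) i ` Des I)"
    proof (cases "k = 1")
      case True thus ?thesis using k by simp
    next
      case False
      then obtain k' where k': "k = Suc k'" "1 \<le> k'" using k by (cases k) auto
      hence "x = i + sum_list (take k' I)" using k by simp
      moreover have "sum_list (take k' I) \<in> Des I" unfolding Des_def using k k' by auto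
      ultimately show ?thesis by auto
    qed
  next
    fix x assume "x \<in> insert i ((+) i ` Des I)"
    then consider "x = i" | k where "1 \<le> k" "k < length I" "x = i + sum_list (take k I)"
      unfolding Des_def by auto
    thus "x \<in> Des (i # I)"
    proof cases
      case 1
      have "sum_list (take 1 (i#I)) = i" by simp
      thus ?thesis unfolding Des_def using 1 False by (auto intro!: exI[of _ 1])
    next
      case 2
      have "sum_list (take (Suc k) (i#I)) = x" using 2 by simp
      thus ?thesis unfolding Des_def using 2 by (auto intro!: exI[of _ "Suc k"])
    qed
  qed
  thus ?thesis using False by simp
qed

lemma Des_snoc: "Des (J @ [x]) = (if J = [] then {} else insert (sum_list J) (Des J))"
proof -
  have "Des (J @ [x]) = {sum_list (take k J) | k. 1 \<le> k \<and> k \<le> length J}"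
    unfolding Des_def apply (auto simp: less_Suc_eq_le)
    apply (rule_tac x=k in exI) apply simp done
  also have "\<dots> = (if J = [] then {} else insert (sum_list J) (Des J))"
    unfolding Des_def apply (auto simp: le_less)
    apply (rule_tac x="length J" in exI) apply (cases J) apply auto done
  finally show ?thesis .
qed

lemma pos_sum_pos: "\<forall>x\<in>set I. 0 < x \<Longrightarrow> I \<noteq> [] \<Longrightarrow> 0 < sum_list (I::nat list)"
  by (cases I) auto

lemma Des_pos: "\<forall>x\<in>set I. 0 < x \<Longrightarrow> d \<in> Des I \<Longrightarrow> 0 < d \<and> d < sum_list I"
proof (induction I arbitrary: d)
  case Nil thus ?case by simp
next
  case (Cons i I)
  hence ne: "I \<noteq> []" by (auto simp: Des_Cons split: if_splits)
  hence "sum_list I > 0" using Cons.prems pos_sum_pos[of I] by auto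
  moreover have IH: "\<forall>d\<in>Des I. 0 < d \<and> d < sum_list I" using Cons by auto
  moreover have "0 < i" using Cons.prems by auto
  moreover have "d = i \<or> (\<exists>e\<in>Des I. d = i + e)" using Cons.prems(2) ne by (auto simp: Des_Cons)
  ultimately show ?case by fastforce
qed

lemma Des_card: "\<forall>x\<in>set I. 0 < x \<Longrightarrow> card (Des I) = length I - 1"
proof (induction I)
  case Nil thus ?case by simp
next
  case (Cons i I)
  show ?case
  proof (cases "I = []")
    case True thus ?thesis by (simp add: Des_Cons)
  next
    case False
    have "i \<notin> (+) i ` Des I" using Des_pos[of I 0] Cons.prems by auto
    hence "card (Des (i#I)) = Suc (card ((+) i ` Des I))"
      using False by (simp add: Des_Cons Des_finite)
    also have "card ((+) i ` Des I) = card (Des I)" by (rule card_image) auto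
    finally show ?thesis using Cons False by simp
  qed
qed


lemma Des_inj: "\<forall>x\<in>set I. 0 < x \<Longrightarrow> \<forall>x\<in>set J. 0 < x \<Longrightarrow> sum_list I = sum_list J
   \<Longrightarrow> Des I = Des J \<Longrightarrow> I = J"
proof (induction I arbitrary: J)
  case Nil thus ?case using pos_sum_pos[of J] by (cases J) auto
next
  case (Cons i I)
  then obtain j J' where J: "J = j # J'" using pos_sum_pos[of "i#I"] by (cases J) auto
  show ?case
  proof (cases "I = []")
    case True
    hence "J' = []" using Cons.prems J by (auto simp: Des_Cons split: if_splits)
    thus ?thesis using Cons.prems J True by simp
  next
    case False
    hence F': "J' \<noteq> []" using Cons.prems J by (auto simp: Des_Cons split: if_splits)
    have eq: "insert i ((+) i ` Des I) = insert j ((+) j ` Des J')"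
      using Cons.prems J False F' by (simp add: Des_Cons)
    have pI: "\<forall>d\<in>Des I. 0 < d" using Des_pos[of I] Cons.prems by auto
    have pJ: "\<forall>d\<in>Des J'. 0 < d" using Des_pos[of J'] Cons.prems J by auto
    have "i = j"
    proof (rule ccontr)
      assume "i \<noteq> j"
      have "i \<in> insert j ((+) j ` Des J')" "j \<in> insert i ((+) i ` Des I)" using eq by auto
      hence "i \<in> (+) j ` Des J'" "j \<in> (+) i ` Des I" using \<open>i \<noteq> j\<close> by auto
      thus False using pI pJ by auto
    qed
    hence "(+) i ` Des I = (+) i ` Des J'"
    proof -
      have "i \<notin> (+) i ` Des I" "i \<notin> (+) i ` Des J'" using pI pJ by auto
      thus ?thesis using eq \<open>i = j\<close> insert_ident by metis
    qed
    moreover have "inj ((+) i)" by (rule injI) simp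
    ultimately have "Des I = Des J'" by (simp add: inj_image_eq_iff)
    moreover have "sum_list I = sum_list J'" using Cons.prems(3) J \<open>i = j\<close> by simp
    ultimately have "I = J'" using Cons.IH[of J'] Cons.prems(1,2) J by simp
    thus ?thesis using J \<open>i = j\<close> by simp
  qed
qed



fun cof :: "nat set \<Rightarrow> nat \<Rightarrow> nat list" where
  "cof S 0 = []"
| "cof S (Suc m) = (if m = 0 then [1] else if m \<in> S then cof S m @ [1]
      else butlast (cof S m) @ [Suc (last (cof S m))])"

lemma cof_props: "1 \<le> m \<Longrightarrow> cof S m \<noteq> [] \<and> (\<forall>x\<in>set (cof S m). 0 < x) \<and> sum_list (cof S m) = m
   \<and> Des (cof S m) = S \<inter> {1..<m}"
proof (induction m)
  case 0 thus ?case by simp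
next
  case (Suc m)
  show ?case
  proof (cases "m = 0")
    case True thus ?thesis by (simp add: Des_Cons)
  next
    case False
    define J where "J = cof S m"
    have IH: "J \<noteq> []" "\<forall>x\<in>set J. 0 < x" "sum_list J = m" "Des J = S \<inter> {1..<m}"
      using Suc False unfolding J_def by auto
    show ?thesis
    proof (cases "m \<in> S")
      case True
      have "Des (J @ [1]) = S \<inter> {1..<Suc m}"
        using IH True False by (auto simp: Des_snoc)
      thus ?thesis using IH True False unfolding J_def by auto
    next
      case mS: False
      have JJ: "J = butlast J @ [last J]" using IH by simp
      have "sum_list J = sum_list (butlast J) + last J" by (subst JJ) simp
      moreover have "Des (butlast J @ [Suc (last J)]) = Des J"
        by (subst (2) JJ) (simp add: Des_snoc)
      moreover have "\<forall>x\<in>set (butlast J). 0 < x" using IH(2) by (meson in_set_butlastD)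
      ultimately show ?thesis using IH mS False unfolding J_def
        by (auto simp: atLeastLessThanSuc)
    qed
  qed
qed

lemma length_le_sum: "\<forall>x\<in>set I. 0 < x \<Longrightarrow> length I \<le> sum_list (I::nat list)"
  by (induction I) auto

lemma comps_finite: "finite {J. is_comp n J}"
proof -
  have "{J. is_comp n J} \<subseteq> {xs. set xs \<subseteq> {0..n} \<and> length xs \<le> n}"
    unfolding is_comp_def using length_le_sum by (auto simp: member_le_sum_list)
  thus ?thesis by (rule finite_subset) (rule finite_lists_length_le, simp)
qed

lemma comp_nonempty: "1 \<le> n \<Longrightarrow> is_comp n J \<Longrightarrow> J \<noteq> []"
  unfolding is_comp_def by auto

lemma comp_length: "1 \<le> n \<Longrightarrow> is_comp n J \<Longrightarrow> length J = Suc (card (Des J))"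
  using comp_nonempty[of n J] Des_card[of J] unfolding is_comp_def by (cases J) auto

lemma comps_bij: "1 \<le> n \<Longrightarrow> bij_betw Des {J. is_comp n J} (Pow {1..<n})"
proof (rule bij_betw_imageI)
  show "inj_on Des {J. is_comp n J}"
    by (rule inj_onI) (auto simp: is_comp_def intro: Des_inj)
  assume n: "1 \<le> n"
  show "Des ` {J. is_comp n J} = Pow {1..<n}"
  proof
    show "Des ` {J. is_comp n J} \<subseteq> Pow {1..<n}"
      using Des_pos unfolding is_comp_def by fastforce
    show "Pow {1..<n} \<subseteq> Des ` {J. is_comp n J}"
    proof
      fix S assume S: "S \<in> Pow {1..<n}"
      have "is_comp n (cof S n)" "Des (cof S n) = S"
        using cof_props[OF n, of S] S unfolding is_comp_def by auto
      thus "S \<in> Des ` {J. is_comp n J}" by force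
    qed
  qed
qed



lemma card_pairs2: "finite A \<Longrightarrow> finite B \<Longrightarrow>
  card {(a,b). a\<in>A \<and> b\<in>B \<and> P a b} = (\<Sum>b\<in>B. card {a\<in>A. P a b})"
proof -
  assume fin: "finite A" "finite B"
  have "{(a,b). a\<in>A \<and> b\<in>B \<and> P a b} = (\<lambda>(b,a). (a,b)) ` (SIGMA b:B. {a\<in>A. P a b})" by auto
  moreover have "inj_on (\<lambda>(b,a). (a,b)) (SIGMA b:B. {a\<in>A. P a b})" by (auto simp: inj_on_def)
  ultimately have "card {(a,b). a\<in>A \<and> b\<in>B \<and> P a b} = card (SIGMA b:B. {a\<in>A. P a b})"
    by (simp add: card_image)
  thus ?thesis using fin by simp
qed

lemma card_pairs1: "finite A \<Longrightarrow> finite B \<Longrightarrow>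
  card {(a,b). a\<in>A \<and> b\<in>B \<and> P a b} = (\<Sum>a\<in>A. card {b\<in>B. P a b})"
proof -
  assume fin: "finite A" "finite B"
  have "{(a,b). a\<in>A \<and> b\<in>B \<and> P a b} = (SIGMA a:A. {b\<in>B. P a b})" by auto
  thus ?thesis using fin by simp
qed

lemma prod_powi: assumes "(q::'a::field) \<noteq> 0" "finite S" shows "(\<Prod>b\<in>S. q powi f b) = q powi (\<Sum>b\<in>S. f b)"
  using assms(2) by (induction S rule: finite_induct) (auto simp: power_int_add assms(1))

lemma inv_set:
  fixes q :: "'a::field" and D E :: "nat set"
  assumes q: "q \<noteq> 0" and fD: "finite D" and ED: "E \<subseteq> D"
  shows "(\<Sum>S | E \<subseteq> S \<and> S \<subseteq> D. q ^ card {(a,b). a\<in>D \<and> b\<in>S \<and> a\<ge>b} * (-1/q)^(card S - card E)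
           * q powi (- int (card {(a,b). a\<in>S \<and> b\<in>E \<and> a \<le> b}))) = (if D = E then 1 else 0)"
proof -
  have fE: "finite E" using fD ED finite_subset by blast
  define \<alpha> where "\<alpha> b = card {a\<in>D. a \<ge> b}" for b
  define \<beta> where "\<beta> b = card {c\<in>E. b \<le> c}" for b
  define \<gamma> where "\<gamma> b = q powi (int (\<alpha> b) - int (\<beta> b) - 1)" for b
  define T where "T = D - E"
  have fT: "finite T" using fD T_def by simp
  have trm: "q ^ card {(a,b). a\<in>D \<and> b\<in>S \<and> a\<ge>b} * (-1/q)^(card S - card E)
           * q powi (- int (card {(a,b). a\<in>S \<and> b\<in>E \<and> a \<le> b}))
        = q powi (card E) * (\<Prod>b\<in>S. \<gamma> b) * (-1)^(card S - card E)"
    if S: "E \<subseteq> S" "S \<subseteq> D" for S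
  proof -
    have fS: "finite S" using S fD finite_subset by blast
    have cS: "card E \<le> card S" using S fS card_mono by blast
    have c1: "card {(a,b). a\<in>D \<and> b\<in>S \<and> a\<ge>b} = (\<Sum>b\<in>S. \<alpha> b)"
      unfolding \<alpha>_def by (rule card_pairs2[OF fD fS])
    have c2: "card {(a,b). a\<in>S \<and> b\<in>E \<and> a \<le> b} = (\<Sum>b\<in>S. \<beta> b)"
      unfolding \<beta>_def by (rule card_pairs1[OF fS fE])
    have "(\<Prod>b\<in>S. \<gamma> b) = q powi (\<Sum>b\<in>S. (int (\<alpha> b) - int (\<beta> b) - 1))"
      unfolding \<gamma>_def by (rule prod_powi[OF q fS])
    also have "(\<Sum>b\<in>S. (int (\<alpha> b) - int (\<beta> b) - 1)) = int (\<Sum>b\<in>S. \<alpha> b) - int (\<Sum>b\<in>S. \<beta> b) - int (card S)"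
      by (simp add: sum_subtractf)
    finally have P: "(\<Prod>b\<in>S. \<gamma> b) = q powi (int (\<Sum>b\<in>S. \<alpha> b) - int (\<Sum>b\<in>S. \<beta> b) - int (card S))" .
    define A where "A = (\<Sum>b\<in>S. \<alpha> b)"
    define B where "B = (\<Sum>b\<in>S. \<beta> b)"
    define k where "k = card S - card E"
    have P': "(\<Prod>b\<in>S. \<gamma> b) = q powi (int A - int B - int (card S))" using P unfolding A_def B_def .
    have m: "(-1/q)^k = (-1)^k * q powi (- int k)"
    proof -
      have "(-1/q)^k = (-(1/q))^k" by simp
      also have "\<dots> = (-1)^k * (1/q)^k" by (rule power_minus)
      also have "\<dots> = (-1)^k / q^k" by (simp add: power_one_over)
      finally show ?thesis by (simp add: power_int_minus_divide)
    qed
    have "q ^ A * ((-1)^k * q powi (- int k)) * q powi (- int B)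
        = (-1)^k * (q powi (int A) * q powi (- int k) * q powi (- int B))"
      by (simp add: mult_ac del: power_int_of_nat add: power_int_of_nat[symmetric])
    also have "q powi (int A) * q powi (- int k) * q powi (- int B) = q powi (int A + (- int k) + (- int B))"
      by (simp only: power_int_add[OF disjI1[OF q]])
    also have "int A + (- int k) + (- int B) = int (card E) + (int A - int B - int (card S))"
      using cS unfolding k_def by simp
    also have "q powi \<dots> = q powi (card E) * (\<Prod>b\<in>S. \<gamma> b)"
      using q by (simp add: power_int_add P')
    finally have "q ^ A * ((-1)^k * q powi (- int k)) * q powi (- int B) = (-1)^k * (q powi (card E) * (\<Prod>b\<in>S. \<gamma> b))" .
    thus ?thesis unfolding c1 c2 A_def[symmetric] B_def[symmetric] k_def[symmetric] m by (simp add: mult_ac)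
  qed
  have SE: "{S. E \<subseteq> S \<and> S \<subseteq> D} = (\<lambda>U. E \<union> U) ` Pow T"
    unfolding T_def using ED by (auto intro!: image_eqI[where x="_ - E"])
  have "(\<Sum>S | E \<subseteq> S \<and> S \<subseteq> D. q ^ card {(a,b). a\<in>D \<and> b\<in>S \<and> a\<ge>b} * (-1/q)^(card S - card E)
           * q powi (- int (card {(a,b). a\<in>S \<and> b\<in>E \<and> a \<le> b})))
      = (\<Sum>S | E \<subseteq> S \<and> S \<subseteq> D. q powi (card E) * (\<Prod>b\<in>S. \<gamma> b) * (-1)^(card S - card E))"
    by (rule sum.cong[OF refl], rule trm) auto
  also have "\<dots> = (\<Sum>S\<in>(\<lambda>U. E \<union> U) ` Pow T. q powi (card E) * (\<Prod>b\<in>S. \<gamma> b) * (-1)^(card S - card E))"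
    by (simp only: SE)
  also have "(\<Sum>S\<in>(\<lambda>U. E \<union> U) ` Pow T. q powi (card E) * (\<Prod>b\<in>S. \<gamma> b) * (-1)^(card S - card E))
      = (\<Sum>U\<in>Pow T. q powi (card E) * (\<Prod>b\<in>E \<union> U. \<gamma> b) * (-1)^(card (E \<union> U) - card E))"
  proof (rule sum.reindex[unfolded comp_def])
    show "inj_on (\<lambda>U. E \<union> U) (Pow T)"
      unfolding T_def by (rule inj_onI) blast
  qed
  also have "\<dots> = (\<Sum>U\<in>Pow T. q powi (card E) * (\<Prod>b\<in>E. \<gamma> b) * (\<Prod>b\<in>U. - \<gamma> b))"
  proof (rule sum.cong[OF refl])
    fix U assume U: "U \<in> Pow T"
    have fU: "finite U" using U fT finite_subset by blast
    have dj: "E \<inter> U = {}" using U T_def by auto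
    have "card (E \<union> U) - card E = card U" using card_Un_disjoint[OF fE fU dj] by simp
    moreover have "(\<Prod>b\<in>E \<union> U. \<gamma> b) = (\<Prod>b\<in>E. \<gamma> b) * (\<Prod>b\<in>U. \<gamma> b)"
      by (rule prod.union_disjoint[OF fE fU dj])
    moreover have "(\<Prod>b\<in>U. - \<gamma> b) = (-1)^card U * (\<Prod>b\<in>U. \<gamma> b)"
      by (simp add: prod_uminus) 
    ultimately show "q powi (card E) * (\<Prod>b\<in>E \<union> U. \<gamma> b) * (-1)^(card (E \<union> U) - card E)
        = q powi (card E) * (\<Prod>b\<in>E. \<gamma> b) * (\<Prod>b\<in>U. - \<gamma> b)" by (simp add: mult_ac)
  qed
  also have "\<dots> = q powi (card E) * (\<Prod>b\<in>E. \<gamma> b) * (\<Sum>U\<in>Pow T. (\<Prod>b\<in>U. - \<gamma> b))"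
    by (simp add: sum_distrib_left)
  also have "(\<Sum>U\<in>Pow T. (\<Prod>b\<in>U. - \<gamma> b)) = (\<Prod>b\<in>T. - \<gamma> b + 1)"
    using prod_add[OF fT, of "\<lambda>b. - \<gamma> b" "\<lambda>_. 1"] by simp
  finally have main: "(\<Sum>S | E \<subseteq> S \<and> S \<subseteq> D. q ^ card {(a,b). a\<in>D \<and> b\<in>S \<and> a\<ge>b} * (-1/q)^(card S - card E)
           * q powi (- int (card {(a,b). a\<in>S \<and> b\<in>E \<and> a \<le> b})))
      = q powi (card E) * (\<Prod>b\<in>E. \<gamma> b) * (\<Prod>b\<in>T. - \<gamma> b + 1)" .
  show ?thesis
  proof (cases "D = E")
    case True
    hence T0: "T = {}" using T_def by simp
    have "\<gamma> b = q powi (-1)" for b unfolding \<gamma>_def \<alpha>_def \<beta>_def using True by simp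
    hence "(\<Prod>b\<in>E. \<gamma> b) = q powi (\<Sum>b\<in>E. -1)" using prod_powi[OF q fE, of "\<lambda>_. -1"] by simp
    hence "q powi (card E) * (\<Prod>b\<in>E. \<gamma> b) = 1" using q by (simp add: power_int_minus_divide)
    thus ?thesis using main T0 True by simp
  next
    case False
    hence Tne: "T \<noteq> {}" using T_def ED by auto
    define b where "b = Max T"
    have bT: "b \<in> T" using Tne fT b_def by simp
    have "{a\<in>D. a \<ge> b} = insert b {c\<in>E. b \<le> c}"
    proof (rule set_eqI, rule iffI)
      fix a assume a: "a \<in> {a\<in>D. a \<ge> b}"
      show "a \<in> insert b {c\<in>E. b \<le> c}"
      proof (cases "a \<in> E")
        case True thus ?thesis using a by simp
      next
        case False
        hence "a \<in> T" using a T_def by simp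
        hence "a \<le> b" using fT b_def by simp
        thus ?thesis using a by simp
      qed
    next
      fix a assume "a \<in> insert b {c\<in>E. b \<le> c}"
      thus "a \<in> {a\<in>D. a \<ge> b}" using bT T_def ED by auto
    qed
    moreover have "b \<notin> {c\<in>E. b \<le> c}" using bT T_def by simp
    ultimately have "\<alpha> b = Suc (\<beta> b)" unfolding \<alpha>_def \<beta>_def using fE by simp
    hence "\<gamma> b = 1" unfolding \<gamma>_def by simp
    hence "(\<Prod>b\<in>T. - \<gamma> b + 1) = 0" using bT fT by (metis add.left_inverse prod_zero_iff)
    thus ?thesis using main False by simp
  qed
qed



lemma refines_refl: "refines I I" unfolding refines_def by simp

lemma key_inv:
  fixes q :: "'a::field"
  assumes q: "q \<noteq> 0" and n: "1 \<le> n" and I: "is_comp n I" and K: "is_comp n K"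
  shows "(\<Sum>J | is_comp n J \<and> refines I J \<and> refines J K.
            q ^ st I J * ((-1/q)^(length J - length K) * q powi (- int (st' J K))))
         = (if I = K then 1 else 0)"
proof (cases "refines I K")
  case False
  hence E0: "{J. is_comp n J \<and> refines I J \<and> refines J K} = {}" unfolding refines_def by auto
  have "I \<noteq> K" using False refines_refl by auto
  thus ?thesis unfolding E0 by simp
next
  case True
  define D where "D = Des I"
  define E where "E = Des K"
  have ED: "E \<subseteq> D" using True unfolding refines_def D_def E_def .
  have fD: "finite D" unfolding D_def by (rule Des_finite)
  define g where "g S = q ^ card {(a,b). a\<in>D \<and> b\<in>S \<and> a\<ge>b} * (-1/q)^(card S - card E)
           * q powi (- int (card {(a,b). a\<in>S \<and> b\<in>E \<and> a \<le> b}))" for S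
  have bij: "bij_betw Des {J. is_comp n J \<and> refines I J \<and> refines J K} {S. E \<subseteq> S \<and> S \<subseteq> D}"
  proof (rule bij_betw_imageI)
    show "inj_on Des {J. is_comp n J \<and> refines I J \<and> refines J K}"
      using bij_betw_imp_inj_on[OF comps_bij[OF n]] by (rule inj_on_subset) auto
    show "Des ` {J. is_comp n J \<and> refines I J \<and> refines J K} = {S. E \<subseteq> S \<and> S \<subseteq> D}"
    proof
      show "Des ` {J. is_comp n J \<and> refines I J \<and> refines J K} \<subseteq> {S. E \<subseteq> S \<and> S \<subseteq> D}"
        unfolding refines_def D_def E_def by auto
      show "{S. E \<subseteq> S \<and> S \<subseteq> D} \<subseteq> Des ` {J. is_comp n J \<and> refines I J \<and> refines J K}"
      proof
        fix S assume S: "S \<in> {S. E \<subseteq> S \<and> S \<subseteq> D}"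
        have "D \<in> Pow {1..<n}" using bij_betw_imp_surj_on[OF comps_bij[OF n]] I unfolding D_def by auto
        hence "S \<in> Pow {1..<n}" using S by auto
        then obtain J where J: "is_comp n J" "Des J = S"
          using bij_betw_imp_surj_on[OF comps_bij[OF n]] by (metis (no_types, lifting) imageE mem_Collect_eq)
        thus "S \<in> Des ` {J. is_comp n J \<and> refines I J \<and> refines J K}"
          using S unfolding refines_def D_def E_def by auto
      qed
    qed
  qed
  have "(\<Sum>J | is_comp n J \<and> refines I J \<and> refines J K.
            q ^ st I J * ((-1/q)^(length J - length K) * q powi (- int (st' J K))))
      = (\<Sum>J | is_comp n J \<and> refines I J \<and> refines J K. g (Des J))"
  proof (rule sum.cong[OF refl])
    fix J assume "J \<in> {J. is_comp n J \<and> refines I J \<and> refines J K}"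
    hence "is_comp n J" by simp
    hence "length J - length K = card (Des J) - card E"
      using comp_length[OF n] K unfolding E_def by simp
    thus "q ^ st I J * ((-1/q)^(length J - length K) * q powi (- int (st' J K))) = g (Des J)"
      unfolding g_def st_def st'_def D_def E_def by (simp add: mult_ac)
  qed
  also have "\<dots> = (\<Sum>S | E \<subseteq> S \<and> S \<subseteq> D. g S)"
    by (rule sum.reindex_bij_betw[OF bij])
  also have "\<dots> = (if D = E then 1 else 0)"
    unfolding g_def by (rule inv_set[OF q fD ED])
  also have "(D = E) = (I = K)"
    using Des_inj[of I K] I K unfolding D_def E_def is_comp_def by auto
  finally show ?thesis .
qed



lemma Lcoeffs_formula:
  fixes q :: "'a::field"
  assumes q: "q \<noteq> 0" and n: "1 \<le> n"
  shows "\<forall>I. is_comp n I \<longrightarrow> Lcoeffs q n c I =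
     (\<Sum>J | is_comp n J \<and> refines I J. (-1/q)^(length I - length J) * q powi (- int (st' I J)) * c J)"
proof -
  define Bm where "Bm J K = (-1/q)^(length J - length K) * q powi (- int (st' J K))" for J K
  define CS where "CS = {J. is_comp n J}"
  have fCS: "finite CS" unfolding CS_def by (rule comps_finite)
  define e' where "e' I = (if is_comp n I then (\<Sum>J | is_comp n J \<and> refines I J. Bm I J * c J) else 0)" for I
  have sumif: "(\<Sum>J | is_comp n J \<and> P J. f J) = (\<Sum>J\<in>CS. if P J then f J else 0)" for P and f :: "nat list \<Rightarrow> 'a"
  proof -
    have "{J. is_comp n J \<and> P J} = {J\<in>CS. P J}" unfolding CS_def by auto
    thus ?thesis using sum.inter_filter[OF fCS, of f P] by simp
  qed
  have P1: "c I = (\<Sum>J | is_comp n J \<and> refines I J. q ^ st I J * e' J)" if I: "is_comp n I" for I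
  proof -
    have "(\<Sum>J | is_comp n J \<and> refines I J. q ^ st I J * e' J)
        = (\<Sum>J\<in>CS. \<Sum>K\<in>CS. if refines I J \<and> refines J K then q ^ st I J * Bm J K * c K else 0)"
    proof -
      have "(\<Sum>J | is_comp n J \<and> refines I J. q ^ st I J * e' J)
          = (\<Sum>J\<in>CS. if refines I J then q ^ st I J * e' J else 0)" by (rule sumif)
      also have "\<dots> = (\<Sum>J\<in>CS. \<Sum>K\<in>CS. if refines I J \<and> refines J K then q ^ st I J * Bm J K * c K else 0)"
      proof (rule sum.cong[OF refl])
        fix J assume J: "J \<in> CS"
        have "e' J = (\<Sum>K\<in>CS. if refines J K then Bm J K * c K else 0)"
          using J unfolding e'_def CS_def by (simp add: sumif[unfolded CS_def])
        thus "(if refines I J then q ^ st I J * e' J else 0)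
            = (\<Sum>K\<in>CS. if refines I J \<and> refines J K then q ^ st I J * Bm J K * c K else 0)"
          by (auto simp: sum_distrib_left mult_ac intro!: sum.cong)
      qed
      finally show ?thesis .
    qed
    also have "\<dots> = (\<Sum>K\<in>CS. \<Sum>J\<in>CS. if refines I J \<and> refines J K then q ^ st I J * Bm J K * c K else 0)"
      by (rule sum.swap)
    also have "\<dots> = (\<Sum>K\<in>CS. c K * (if I = K then 1 else 0))"
    proof (rule sum.cong[OF refl])
      fix K assume K: "K \<in> CS"
      have "(\<Sum>J\<in>CS. if refines I J \<and> refines J K then q ^ st I J * Bm J K * c K else 0)
          = c K * (\<Sum>J\<in>CS. if refines I J \<and> refines J K then q ^ st I J * Bm J K else 0)"
        by (auto simp: sum_distrib_left mult_ac intro!: sum.cong)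
      also have "(\<Sum>J\<in>CS. if refines I J \<and> refines J K then q ^ st I J * Bm J K else 0)
          = (\<Sum>J | is_comp n J \<and> refines I J \<and> refines J K. q ^ st I J * Bm J K)"
        by (rule sumif[symmetric])
      also have "\<dots> = (if I = K then 1 else 0)"
        unfolding Bm_def by (rule key_inv[OF q n I K[unfolded CS_def, simplified]])
      finally show "(\<Sum>J\<in>CS. if refines I J \<and> refines J K then q ^ st I J * Bm J K * c K else 0)
          = c K * (if I = K then 1 else 0)" .
    qed
    also have "\<dots> = c I" using I fCS unfolding CS_def by (simp add: if_distrib cong: if_cong)
    finally show ?thesis by simp
  qed
  define Pr where "Pr e \<longleftrightarrow> (\<forall>I. is_comp n I \<longrightarrow> c I = (\<Sum>J | is_comp n J \<and> refines I J. q ^ st I J * e J))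
      \<and> (\<forall>J. \<not> is_comp n J \<longrightarrow> e J = 0)" for e
  have Pe': "Pr e'" unfolding Pr_def using P1 e'_def by auto
  have uniq: "e2 = e'" if P2: "Pr e2" for e2
  proof -
    define d where "d J = e2 J - e' J" for J
    have d0: "(\<Sum>J | is_comp n J \<and> refines I J. q ^ st I J * d J) = 0" if I: "is_comp n I" for I
    proof -
      have "(\<Sum>J | is_comp n J \<and> refines I J. q ^ st I J * d J)
          = (\<Sum>J | is_comp n J \<and> refines I J. q ^ st I J * e2 J) - (\<Sum>J | is_comp n J \<and> refines I J. q ^ st I J * e' J)"
        unfolding d_def by (simp add: right_diff_distrib sum_subtractf)
      thus ?thesis using P2 Pe' I unfolding Pr_def by simp
    qed
    have "\<forall>I. is_comp n I \<and> card (Des I) = m \<longrightarrow> d I = 0" for m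
    proof (induction m rule: less_induct)
      case (less m)
      show ?case
      proof (intro allI impI)
        fix I assume I: "is_comp n I \<and> card (Des I) = m"
        define A where "A = {J. is_comp n J \<and> refines I J}"
        have fA: "finite A" unfolding A_def using fCS unfolding CS_def by (rule finite_subset[rotated]) auto
        have IA: "I \<in> A" unfolding A_def using I refines_refl by auto
        have rest: "d J = 0" if J: "J \<in> A - {I}" for J
        proof -
          have Jc: "is_comp n J" and ref: "Des J \<subseteq> Des I" using J unfolding A_def refines_def by auto
          have "Des J \<noteq> Des I" using J I Des_inj[of I J] unfolding is_comp_def A_def by auto
          hence "Des J \<subset> Des I" using ref by auto
          hence "card (Des J) < m" using I Des_finite psubset_card_mono by metis
          thus ?thesis using less.IH Jc by blast
        qed
        have "0 = (\<Sum>J\<in>A. q ^ st I J * d J)" using d0 I unfolding A_def by simp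
        also have "\<dots> = q ^ st I I * d I + (\<Sum>J\<in>A - {I}. q ^ st I J * d J)"
          by (rule sum.remove[OF fA IA])
        also have "(\<Sum>J\<in>A - {I}. q ^ st I J * d J) = 0" using rest by simp
        finally have "q ^ st I I * d I = 0" by simp
        thus "d I = 0" using q by simp
      qed
    qed
    hence dz: "\<And>I. is_comp n I \<Longrightarrow> d I = 0" by blast
    have "e2 I = e' I" for I
    proof (cases "is_comp n I")
      case True thus ?thesis using dz[of I] unfolding d_def by simp
    next
      case False
      have "e2 I = 0" using P2 False unfolding Pr_def by blast
      thus ?thesis using False unfolding e'_def by simp
    qed
    thus ?thesis by auto
  qed
  have "Lcoeffs q n c = e'"
    unfolding Lcoeffs_def using Pe' uniq unfolding Pr_def by (rule the_equality)
  thus ?thesis unfolding e'_def Bm_def by simp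
qed



fun wc :: "nat list \<Rightarrow> nat list" where
  "wc [] = []"
| "wc (a # w) = (if a \<in> set w then (case wc w of [] \<Rightarrow> [1] | j # J \<Rightarrow> Suc j # J) else 1 # wc w)"

lemma wc_nil_iff: "wc w = [] \<longleftrightarrow> w = []"
  by (cases w) (auto split: list.splits)

lemma wc_props: "sum_list (wc w) = length w \<and> (\<forall>x\<in>set (wc w). 0 < x) \<and> length (wc w) = card (set w)"
proof (induction w)
  case Nil thus ?case by simp
next
  case (Cons a w)
  show ?case
  proof (cases "a \<in> set w")
    case True
    then obtain j J where wj: "wc w = j # J" using wc_nil_iff[of w] by (cases "wc w") auto
    thus ?thesis using Cons True by (auto simp: insert_absorb)
  next
    case False thus ?thesis using Cons by simp
  qed
qed

lemma in_set_drop_iff: "x \<in> set (drop n w) \<longleftrightarrow> (\<exists>i. n \<le> i \<and> i < length w \<and> w ! i = x)"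
proof
  assume "x \<in> set (drop n w)"
  then obtain i where "i < length (drop n w)" "drop n w ! i = x" by (auto simp: in_set_conv_nth)
  thus "\<exists>i. n \<le> i \<and> i < length w \<and> w ! i = x" by (intro exI[of _ "n + i"]) auto
next
  assume "\<exists>i. n \<le> i \<and> i < length w \<and> w ! i = x"
  then obtain i where i: "n \<le> i" "i < length w" "w ! i = x" by blast
  hence "drop n w ! (i - n) = x" "i - n < length (drop n w)" by auto
  thus "x \<in> set (drop n w)" by (metis nth_mem)
qed

lemma wdes_Cons: "wdes (a # w) = (if a \<notin> set w \<and> w \<noteq> [] then {1} else {}) \<union> Suc ` wdes w"
proof (rule set_eqI)
  fix x
  show "x \<in> wdes (a # w) \<longleftrightarrow> x \<in> (if a \<notin> set w \<and> w \<noteq> [] then {1} else {}) \<union> Suc ` wdes w"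
  proof (cases x)
    case 0 thus ?thesis by (auto simp: wdes_def)
  next
    case (Suc p)
    show ?thesis
    proof (cases p)
      case 0 thus ?thesis using Suc by (auto simp: wdes_def)
    next
      case (Suc p')
      have "x \<notin> {1}" using Suc \<open>x = Suc p\<close> by simp
      moreover have "x \<in> Suc ` wdes w \<longleftrightarrow> p \<in> wdes w" using \<open>x = Suc p\<close> by auto
      ultimately show ?thesis using Suc \<open>x = Suc p\<close> by (auto simp: wdes_def)
    qed
  qed
qed

lemma Des_wc: "Des (wc w) = wdes w"
proof (induction w)
  case Nil thus ?case by (simp add: wdes_def)
next
  case (Cons a w)
  show ?case
  proof (cases "a \<in> set w")
    case True
    then obtain j J where wj: "wc w = j # J" using wc_nil_iff[of w] by (cases "wc w") auto
    have "Des (Suc j # J) = Suc ` Des (j # J)"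
      by (auto simp: Des_Cons image_image)
    thus ?thesis using Cons True wj by (simp add: wdes_Cons)
  next
    case False
    thus ?thesis using Cons wc_nil_iff[of w] by (auto simp: wdes_Cons Des_Cons image_image)
  qed
qed

lemma WC_eq: "WC w = wc w"
  unfolding WC_def
proof (rule the_equality)
  show "is_comp (length w) (wc w) \<and> Des (wc w) = wdes w"
    using wc_props[of w] Des_wc[of w] unfolding is_comp_def by auto
  fix I assume "is_comp (length w) I \<and> Des I = wdes w"
  thus "I = wc w" using Des_inj[of I "wc w"] wc_props[of w] Des_wc[of w] unfolding is_comp_def by auto
qed



lemma sinv_Cons: "sinv (a # w) = sinv w + card {b\<in>set w. b < a}"
proof -
  define Pw where "Pw w = {(i,j). i < j \<and> j < length w \<and> w ! i > w ! j \<and> w ! j \<notin> set (drop (Suc j) w)}" for w :: "nat list"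
  define L where "L = {j. j < length w \<and> w ! j < a \<and> w ! j \<notin> set (drop (Suc j) w)}"
  have fin: "finite (Pw v)" for v
  proof -
    have "Pw v \<subseteq> {..<length v} \<times> {..<length v}" unfolding Pw_def by auto
    thus ?thesis by (rule finite_subset) auto
  qed
  have finL: "finite L" unfolding L_def by auto
  have eq: "Pw (a # w) = (\<lambda>j. (0, Suc j)) ` L \<union> (\<lambda>(i,j). (Suc i, Suc j)) ` Pw w"
  proof (rule set_eqI)
    fix x :: "nat \<times> nat"
    obtain i j where x: "x = (i, j)" by (cases x)
    show "x \<in> Pw (a # w) \<longleftrightarrow> x \<in> (\<lambda>j. (0, Suc j)) ` L \<union> (\<lambda>(i,j). (Suc i, Suc j)) ` Pw w"
    proof (cases j)
      case 0 thus ?thesis using x unfolding Pw_def by auto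
    next
      case (Suc j')
      show ?thesis
      proof (cases i)
        case 0 thus ?thesis using x Suc unfolding Pw_def L_def by auto
      next
        case (Suc i')
        have "x \<in> (\<lambda>(i,j). (Suc i, Suc j)) ` Pw w \<longleftrightarrow> (i', j') \<in> Pw w"
          using x Suc \<open>j = Suc j'\<close> by auto
        thus ?thesis using x Suc \<open>j = Suc j'\<close> unfolding Pw_def L_def by auto
      qed
    qed
  qed
  have "card (Pw (a # w)) = card ((\<lambda>j. (0::nat, Suc j)) ` L) + card ((\<lambda>(i,j). (Suc i, Suc j)) ` Pw w)"
    unfolding eq by (rule card_Un_disjoint) (use finL fin in auto)
  also have "card ((\<lambda>j. (0::nat, Suc j)) ` L) = card L" by (rule card_image) (auto simp: inj_on_def)
  also have "card ((\<lambda>(i,j). (Suc i, Suc j)) ` Pw w) = card (Pw w)" by (rule card_image) (auto simp: inj_on_def)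
  also have "card L = card {b\<in>set w. b < a}"
  proof (rule bij_betw_same_card[of "nth w"], rule bij_betw_imageI)
    show "inj_on (nth w) L"
    proof (rule inj_onI)
      fix j1 j2 assume j: "j1 \<in> L" "j2 \<in> L" "w ! j1 = w ! j2"
      show "j1 = j2"
      proof (rule ccontr)
        assume "j1 \<noteq> j2"
        then consider "j1 < j2" | "j2 < j1" by linarith
        thus False
        proof cases
          case 1
          hence "w ! j1 \<in> set (drop (Suc j1) w)" using j unfolding L_def in_set_drop_iff by auto
          thus False using j unfolding L_def by auto
        next
          case 2
          hence "w ! j2 \<in> set (drop (Suc j2) w)" using j unfolding L_def in_set_drop_iff by auto
          thus False using j unfolding L_def by auto
        qed
      qed
    qed
    show "nth w ` L = {b\<in>set w. b < a}"
    proof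
      show "nth w ` L \<subseteq> {b\<in>set w. b < a}" unfolding L_def by auto
      show "{b\<in>set w. b < a} \<subseteq> nth w ` L"
      proof
        fix b assume b: "b \<in> {b\<in>set w. b < a}"
        define M where "M = {j. j < length w \<and> w ! j = b}"
        have fM: "finite M" unfolding M_def by auto
        have neM: "M \<noteq> {}" using b unfolding M_def by (auto simp: in_set_conv_nth)
        define j where "j = Max M"
        have jM: "j \<in> M" using fM neM j_def by simp
        have "b \<notin> set (drop (Suc j) w)"
        proof
          assume "b \<in> set (drop (Suc j) w)"
          then obtain k where "Suc j \<le> k" "k < length w" "w ! k = b" unfolding in_set_drop_iff by blast
          hence "k \<in> M" "k > j" unfolding M_def by auto
          thus False using fM j_def by (meson Max_ge leD)
        qed
        hence "j \<in> L" using jM b unfolding L_def M_def by auto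
        thus "b \<in> nth w ` L" using jM unfolding M_def by force
      qed
    qed
  qed
  finally show ?thesis unfolding sinv_def Pw_def by simp
qed



definition rk :: "nat set \<Rightarrow> nat \<Rightarrow> nat" where "rk A x = card {y\<in>A. y < x}"

lemma rk_bij: assumes fA: "finite A" shows "bij_betw (rk A) A {0..<card A}"
proof -
  have inj: "inj_on (rk A) A"
  proof (rule inj_onI)
    fix x y assume xy: "x \<in> A" "y \<in> A" "rk A x = rk A y"
    show "x = y"
    proof (rule ccontr)
      assume "x \<noteq> y"
      then consider "x < y" | "y < x" by linarith
      thus False
      proof cases
        case 1
        hence "{z\<in>A. z < x} \<subset> {z\<in>A. z < y}" using xy by auto
        hence "rk A x < rk A y" unfolding rk_def by (rule psubset_card_mono[rotated]) (use fA in auto)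
        thus False using xy by simp
      next
        case 2
        hence "{z\<in>A. z < y} \<subset> {z\<in>A. z < x}" using xy by auto
        hence "rk A y < rk A x" unfolding rk_def by (rule psubset_card_mono[rotated]) (use fA in auto)
        thus False using xy by simp
      qed
    qed
  qed
  have sub: "rk A ` A \<subseteq> {0..<card A}"
  proof
    fix r assume "r \<in> rk A ` A"
    then obtain x where x: "x \<in> A" "r = rk A x" by blast
    have "{z\<in>A. z < x} \<subset> A" using x by auto
    hence "rk A x < card A" unfolding rk_def using fA by (simp add: psubset_card_mono)
    thus "r \<in> {0..<card A}" using x by simp
  qed
  have "card (rk A ` A) = card {0..<card A}" using card_image[OF inj] by simp
  hence "rk A ` A = {0..<card A}" using sub by (simp add: card_subset_eq)
  thus ?thesis using inj by (simp add: bij_betw_def)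
qed

lemma sum_rk: "finite A \<Longrightarrow> (\<Sum>a\<in>A. (q::'a::comm_ring_1) ^ rk A a) = qint q (card A)"
  using sum.reindex_bij_betw[OF rk_bij, of A "\<lambda>i. q ^ i"] unfolding qint_def
  by (simp add: atLeast0LessThan)

lemma pack_props: "packed (pack w) \<and> length (pack w) = length w"
proof -
  define A where "A = set w"
  have fA: "finite A" unfolding A_def by simp
  have "card {y\<in>A. y \<le> x} = Suc (rk A x)" if "x \<in> A" for x
  proof -
    have "{y\<in>A. y \<le> x} = insert x {y\<in>A. y < x}" using that by auto
    thus ?thesis unfolding rk_def using fA by simp
  qed
  hence "set (pack w) = (\<lambda>x. Suc (rk A x)) ` A"
    unfolding pack_def A_def set_map by (rule image_cong[OF refl])
  also have "\<dots> = Suc ` (rk A ` A)" by (simp add: image_image)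
  also have "\<dots> = Suc ` {0..<card A}" using rk_bij[OF fA] by (simp add: bij_betw_def)
  also have "\<dots> = {1..card A}" by (simp add: atLeastLessThanSuc_atLeastAtMost image_Suc_atLeastLessThan)
  finally have "set (pack w) = {1..card A}" .
  thus ?thesis unfolding packed_def pack_def by simp
qed



lemma sinv_single: assumes "length v = 1" shows "sinv v = 0"
proof -
  have E0: "{(i, j). i < j \<and> j < length v \<and> v ! i > v ! j \<and> v ! j \<notin> set (drop (Suc j) v)} = {}"
    using assms by auto
  show ?thesis unfolding sinv_def E0 by simp
qed

lemma star_rep:
  fixes q :: "'a::field"
  assumes q: "q \<noteq> 0"
  shows "star_list q (map Stilde (replicate n 1)) u = (if packed u \<and> length u = n then q ^ sinv u else 0)"
proof (induction n arbitrary: u)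
  case 0
  have "packed []" unfolding packed_def by simp
  thus ?case by (auto simp: wq_one_def sinv_def)
next
  case (Suc n)
  define G where "G = star_list q (map Stilde (replicate n 1))"
  have G: "G v = (if packed v \<and> length v = n then q ^ sinv v else 0)" for v
    unfolding G_def by (rule Suc.IH)
  have "star_list q (map Stilde (replicate (Suc n) 1)) u = star q (Stilde 1) G u"
    unfolding G_def by simp
  also have "\<dots> = (if packed u \<and> length u = Suc n then q ^ sinv u else 0)"
  proof (cases "packed u")
    case False thus ?thesis unfolding star_def by simp
  next
    case True
    define X where "X k = Stilde 1 (pack (take k u)) * G (pack (drop k u)) *
        q powi (int (sinv u) - int (sinv (pack (take k u))) - int (sinv (pack (drop k u))))" for k
    have Xk: "X k = (if k = 1 then X 1 else 0)" if "k \<in> {..length u}" for k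
    proof (cases "k = 1")
      case False
      have "length (pack (take k u)) \<noteq> 1" using that False pack_props[of "take k u"] by auto
      hence S0: "Stilde 1 (pack (take k u)) = 0" unfolding Stilde_def by auto
      have "X k = 0" unfolding X_def S0 by simp
      thus ?thesis using False by simp
    qed simp
    have "star q (Stilde 1) G u = (\<Sum>k\<le>length u. X k)" unfolding star_def X_def using True by simp
    also have "\<dots> = (\<Sum>k\<le>length u. if k = 1 then X 1 else 0)" by (rule sum.cong[OF refl Xk])
    also have "\<dots> = (if u = [] then 0 else X 1)" by (simp add: Suc_le_eq)
    also have "\<dots> = (if length u = Suc n then q ^ sinv u else 0)"
    proof (cases "u = []")
      case True thus ?thesis by simp
    next
      case False
      have p1: "packed (pack (take 1 u)) \<and> length (pack (take 1 u)) = 1" using pack_props[of "take 1 u"] False by (cases u) auto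
      have "\<exists>x. pack (take 1 u) = [x]" using p1 by (simp add: length_Suc_conv)
      hence "sorted (pack (take 1 u))" by auto
      hence s1: "Stilde 1 (pack (take 1 u)) = 1" unfolding Stilde_def using p1 by simp
      have z1: "sinv (pack (take 1 u)) = 0" using p1 sinv_single by blast
      have pd: "packed (pack (drop 1 u))" "length (pack (drop 1 u)) = length u - 1" using pack_props[of "drop 1 u"] by auto
      show ?thesis
      proof (cases "length u = Suc n")
        case True
        define s where "s = sinv (pack (drop 1 u))"
        have "X 1 = q ^ s * q powi (int (sinv u) - int s)"
          unfolding X_def s1 z1 G using pd True s_def by simp
        also have "\<dots> = q powi (int s + (int (sinv u) - int s))"
          by (simp only: power_int_add[OF disjI1[OF q]] power_int_of_nat)
        also have "\<dots> = q ^ sinv u" by simp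
        finally show ?thesis using True False by simp
      next
        case F2: False
        have "G (pack (drop 1 u)) = 0" using G pd F2 False by (cases u) auto
        thus ?thesis unfolding X_def using F2 False by simp
      qed
    qed
    finally show ?thesis using True by simp
  qed
  finally show ?case .
qed



definition Wd :: "nat set \<Rightarrow> nat list \<Rightarrow> nat list set" where
  "Wd A J = {u. set u = A \<and> wc u = J}"

lemma Wd_finite: "finite A \<Longrightarrow> finite (Wd A J)"
proof -
  assume fA: "finite A"
  have "Wd A J \<subseteq> {xs. set xs \<subseteq> A \<and> length xs = sum_list J}"
    unfolding Wd_def using wc_props by auto
  thus ?thesis using finite_lists_length_eq[OF fA] by (rule finite_subset)
qed

lemma wc_Cons_in: "a \<in> set w \<Longrightarrow> \<exists>j J. wc w = j # J \<and> wc (a # w) = Suc j # J"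
  using wc_nil_iff[of w] by (cases "wc w") auto

lemma prod_shift: "(\<Prod>k<length (j # J). qint q (length (j # J) - k) ^ ((j # J) ! k))
   = qint q (Suc (length J)) ^ j * (\<Prod>k<length J. qint q (length J - k) ^ (J ! k))"
  by (simp add: prod.lessThan_Suc_shift del: prod.lessThan_Suc)

lemma Cform:
  fixes q :: "'a::comm_ring_1"
  shows "\<forall>J A. sum_list J = m \<longrightarrow> (\<forall>x\<in>set J. 0 < x) \<longrightarrow> finite A \<longrightarrow> card A = length J \<longrightarrow>
    (\<Sum>u\<in>Wd A J. q ^ sinv u) = (\<Prod>k<length J. qint q (length J - k) ^ (J ! k))"
proof (induction m rule: less_induct)
  case (less m)
  show ?case
  proof (intro allI impI)
    fix J :: "nat list" and A :: "nat set" assume Jm: "sum_list J = m" and Jp: "\<forall>x\<in>set J. 0 < (x::nat)" and fA: "finite A"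
      and cA: "card A = length J"
    show "(\<Sum>u\<in>Wd A J. q ^ sinv u) = (\<Prod>k<length J. qint q (length J - k) ^ (J ! k))"
    proof (cases J)
      case Nil
      hence "A = {}" using cA fA by simp
      hence "Wd A J = {[]}" unfolding Wd_def using Nil by auto
      thus ?thesis using Nil by (simp add: sinv_def)
    next
      case (Cons j J')
      have j1: "1 \<le> j" using Jp Cons by auto
      have sumrk: "(\<Sum>a\<in>A. q ^ rk A a) = qint q (card A)" by (rule sum_rk[OF fA])
      have injC: "inj_on (\<lambda>(a, w). a # w) X" for X :: "(nat \<times> nat list) set" by (auto simp: inj_on_def)
      show ?thesis
      proof (cases "j = 1")
        case True
        have WE: "Wd A J = (\<lambda>(a, w). a # w) ` (SIGMA a:A. Wd (A - {a}) J')"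
        proof
          show "Wd A J \<subseteq> (\<lambda>(a, w). a # w) ` (SIGMA a:A. Wd (A - {a}) J')"
          proof
            fix u assume u: "u \<in> Wd A J"
            then obtain a w where uw: "u = a # w" using Cons wc_nil_iff[of u] unfolding Wd_def by (cases u) auto
            have aw: "a \<notin> set w"
            proof
              assume "a \<in> set w"
              then obtain j0 J0 where "wc w = j0 # J0" "wc u = Suc j0 # J0" using wc_Cons_in uw by blast
              moreover have "0 < j0" using wc_props[of w] \<open>wc w = j0 # J0\<close> by auto
              ultimately show False using u Cons True unfolding Wd_def by auto
            qed
            hence "wc w = J'" "set w = A - {a}" "a \<in> A" using u uw Cons unfolding Wd_def by auto
            thus "u \<in> (\<lambda>(a, w). a # w) ` (SIGMA a:A. Wd (A - {a}) J')" using uw unfolding Wd_def by auto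
          qed
          show "(\<lambda>(a, w). a # w) ` (SIGMA a:A. Wd (A - {a}) J') \<subseteq> Wd A J"
          proof
            fix u assume "u \<in> (\<lambda>(a, w). a # w) ` (SIGMA a:A. Wd (A - {a}) J')"
            then obtain a w where uw: "u = a # w" "a \<in> A" "set w = A - {a}" "wc w = J'" unfolding Wd_def by auto
            hence "a \<notin> set w" by auto
            hence "wc u = J" "set u = A" using uw Cons True by auto
            thus "u \<in> Wd A J" unfolding Wd_def by auto
          qed
        qed
        have IH: "(\<Sum>w\<in>Wd (A - {a}) J'. q ^ sinv w) = (\<Prod>k<length J'. qint q (length J' - k) ^ (J' ! k))"
          if "a \<in> A" for a
          using less.IH[of "sum_list J'"] Jm Jp Cons True fA cA that by auto
        have "(\<Sum>u\<in>Wd A J. q ^ sinv u) = (\<Sum>(a, w)\<in>(SIGMA a:A. Wd (A - {a}) J'). q ^ sinv (a # w))"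
          unfolding WE by (subst sum.reindex[OF injC]) (simp add: case_prod_unfold)
        also have "\<dots> = (\<Sum>a\<in>A. \<Sum>w\<in>Wd (A - {a}) J'. q ^ sinv (a # w))"
          by (rule sum.Sigma[symmetric]) (use fA Wd_finite in auto)
        also have "\<dots> = (\<Sum>a\<in>A. q ^ rk A a * (\<Sum>w\<in>Wd (A - {a}) J'. q ^ sinv w))"
        proof (rule sum.cong[OF refl])
          fix a assume a: "a \<in> A"
          show "(\<Sum>w\<in>Wd (A - {a}) J'. q ^ sinv (a # w)) = q ^ rk A a * (\<Sum>w\<in>Wd (A - {a}) J'. q ^ sinv w)"
            unfolding sum_distrib_left
          proof (rule sum.cong[OF refl])
            fix w assume "w \<in> Wd (A - {a}) J'"
            hence "set w = A - {a}" unfolding Wd_def by auto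
            hence "{b\<in>set w. b < a} = {b\<in>A. b < a}" by auto
            thus "q ^ sinv (a # w) = q ^ rk A a * q ^ sinv w"
              unfolding sinv_Cons rk_def by (simp add: power_add mult_ac)
          qed
        qed
        also have "\<dots> = (\<Sum>a\<in>A. q ^ rk A a) * (\<Prod>k<length J'. qint q (length J' - k) ^ (J' ! k))"
          using IH by (simp add: sum_distrib_right)
        also have "\<dots> = (\<Prod>k<length J. qint q (length J - k) ^ (J ! k))"
          unfolding sumrk prod_shift[of q j J', folded Cons] using cA Cons True by simp
        finally show ?thesis .
      next
        case False
        then obtain j' where j': "j = Suc j'" "1 \<le> j'" using j1 by (cases j) auto
        have WE: "Wd A J = (\<lambda>(a, w). a # w) ` (SIGMA a:A. Wd A (j' # J'))"
        proof
          show "Wd A J \<subseteq> (\<lambda>(a, w). a # w) ` (SIGMA a:A. Wd A (j' # J'))"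
          proof
            fix u assume u: "u \<in> Wd A J"
            then obtain a w where uw: "u = a # w" using Cons wc_nil_iff[of u] unfolding Wd_def by (cases u) auto
            have aw: "a \<in> set w"
            proof (rule ccontr)
              assume "a \<notin> set w"
              hence "wc u = 1 # wc w" using uw by simp
              thus False using u Cons j' unfolding Wd_def by auto
            qed
            then obtain j0 J0 where "wc w = j0 # J0" "wc u = Suc j0 # J0" using wc_Cons_in uw by blast
            hence "wc w = j' # J'" "set w = A" "a \<in> A" using u uw Cons j' aw unfolding Wd_def by auto
            thus "u \<in> (\<lambda>(a, w). a # w) ` (SIGMA a:A. Wd A (j' # J'))" using uw unfolding Wd_def by auto
          qed
          show "(\<lambda>(a, w). a # w) ` (SIGMA a:A. Wd A (j' # J')) \<subseteq> Wd A J"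
          proof
            fix u assume "u \<in> (\<lambda>(a, w). a # w) ` (SIGMA a:A. Wd A (j' # J'))"
            then obtain a w where uw: "u = a # w" "a \<in> A" "set w = A" "wc w = j' # J'" unfolding Wd_def by auto
            thus "u \<in> Wd A J" using Cons j' unfolding Wd_def by auto
          qed
        qed
        have IH: "(\<Sum>w\<in>Wd A (j' # J'). q ^ sinv w) = (\<Prod>k<length (j' # J'). qint q (length (j' # J') - k) ^ ((j' # J') ! k))"
          using less.IH[of "sum_list (j' # J')"] Jm Jp Cons j' fA cA by auto
        have "(\<Sum>u\<in>Wd A J. q ^ sinv u) = (\<Sum>(a, w)\<in>(SIGMA a:A. Wd A (j' # J')). q ^ sinv (a # w))"
          unfolding WE by (subst sum.reindex[OF injC]) (simp add: case_prod_unfold)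
        also have "\<dots> = (\<Sum>a\<in>A. \<Sum>w\<in>Wd A (j' # J'). q ^ sinv (a # w))"
          by (rule sum.Sigma[symmetric]) (use fA Wd_finite in auto)
        also have "\<dots> = (\<Sum>a\<in>A. q ^ rk A a * (\<Sum>w\<in>Wd A (j' # J'). q ^ sinv w))"
        proof (rule sum.cong[OF refl])
          fix a assume a: "a \<in> A"
          show "(\<Sum>w\<in>Wd A (j' # J'). q ^ sinv (a # w)) = q ^ rk A a * (\<Sum>w\<in>Wd A (j' # J'). q ^ sinv w)"
            unfolding sum_distrib_left
          proof (rule sum.cong[OF refl])
            fix w assume "w \<in> Wd A (j' # J')"
            hence "set w = A" unfolding Wd_def by auto
            thus "q ^ sinv (a # w) = q ^ rk A a * q ^ sinv w"
              unfolding sinv_Cons rk_def by (simp add: power_add mult_ac)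
          qed
        qed
        also have "\<dots> = (\<Sum>a\<in>A. q ^ rk A a) * (\<Prod>k<length (j' # J'). qint q (length (j' # J') - k) ^ ((j' # J') ! k))"
          using IH by (simp add: sum_distrib_right)
        also have "\<dots> = (\<Prod>k<length J. qint q (length J - k) ^ (J ! k))"
          unfolding sumrk prod_shift[of q j J', folded Cons] prod_shift[of q j' J'] using cA Cons j' by (simp add: mult_ac)
        finally show ?thesis .
      qed
    qed
  qed
qed



lemma qX_nz: "(qX :: 'k::field poly fract) \<noteq> 0"
  unfolding qX_def by (simp add: Zero_fract_def eq_fract)

lemma c_formula:
  fixes q :: "'a::field"
  assumes q: "q \<noteq> 0" and J: "is_comp n J"
  shows "SJ q (replicate n 1) J = (\<Prod>k<length J. qint q (length J - k) ^ (J ! k))"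
proof -
  have sJ: "sum_list J = n" using J unfolding is_comp_def by simp
  have "SJ q (replicate n 1) J = (\<Sum>u | packed u \<and> length u = n \<and> WC u = J.
        star_list q (map Stilde (replicate n 1)) u)"
    unfolding SJ_def zeta_def sJ by simp
  also have "\<dots> = (\<Sum>u | packed u \<and> length u = n \<and> WC u = J. q ^ sinv u)"
    by (rule sum.cong[OF refl]) (unfold star_rep[OF q], auto)
  also have "{u. packed u \<and> length u = n \<and> WC u = J} = Wd {1..length J} J"
  proof
    show "{u. packed u \<and> length u = n \<and> WC u = J} \<subseteq> Wd {1..length J} J"
    proof
      fix u assume u: "u \<in> {u. packed u \<and> length u = n \<and> WC u = J}"
      hence "wc u = J" using WC_eq by auto
      moreover have "card (set u) = length J" using wc_props[of u] \<open>wc u = J\<close> by simp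
      ultimately show "u \<in> Wd {1..length J} J" using u unfolding Wd_def packed_def by auto
    qed
    show "Wd {1..length J} J \<subseteq> {u. packed u \<and> length u = n \<and> WC u = J}"
    proof
      fix u assume "u \<in> Wd {1..length J} J"
      hence u: "set u = {1..length J}" "wc u = J" unfolding Wd_def by auto
      have "length u = n" using wc_props[of u] u sJ by simp
      moreover have "packed u" unfolding packed_def using u by simp
      ultimately show "u \<in> {u. packed u \<and> length u = n \<and> WC u = J}" using u WC_eq by auto
    qed
  qed
  also have "(\<Sum>u\<in>Wd {1..length J} J. q ^ sinv u) = (\<Prod>k<length J. qint q (length J - k) ^ (J ! k))"
    using Cform[where q=q and m="sum_list J"] J unfolding is_comp_def by simp
  finally show ?thesis .
qed

theorem mainTheorem11:
  fixes n :: nat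
  assumes "n \<ge> 1"
  defines "c \<equiv> SJ (qX :: 'k::field_char_0 poly fract) (replicate n 1)"
  defines "e \<equiv> Lcoeffs (qX :: 'k poly fract) n c"
  shows "(\<forall>I. is_comp n I \<longrightarrow>
            e I = (\<Sum>J | is_comp n J \<and> refines I J.
                     (- 1 / qX) ^ (length I - length J) * qX powi (- int (st' I J)) * c J))
       \<and> (\<forall>J. is_comp n J \<longrightarrow>
            c J = (\<Prod>k<length J. qint qX (length J - k) ^ (J ! k)))"
proof
  show "\<forall>I. is_comp n I \<longrightarrow>
            e I = (\<Sum>J | is_comp n J \<and> refines I J.
                     (- 1 / qX) ^ (length I - length J) * qX powi (- int (st' I J)) * c J)"
    unfolding e_def by (rule Lcoeffs_formula[OF qX_nz assms(1)])
  show "\<forall>J. is_comp n J \<longrightarrow> c J = (\<Prod>k<length J. qint qX (length J - k) ^ (J ! k))"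
    unfolding c_def using c_formula[OF qX_nz] by blast
qed


end
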